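(* Consider the continuous-time system $\dot x=Ax+Bu+Lf(t,z)$, $z=Hx$, with $A,B,L$ unknown, $H\in\mathbb{R}^{p\times n}$ known, controlled by $u=Kx+Mf(t,z)$, and data $U_0,X_0,X_1,F_0$ (with $X_1$ containing sampled state derivatives) satisfying $X_1=AX_0+BU_0+LF_0$. Suppose there exist $Y_1\in\mathbb{R}^{T\times n}$, $Y_2\in\mathbb{R}^{T\times p}$ such that $X_0Y_1$ is symmetric positive definite, $Y_1^\top X_1^\top+X_1Y_1\prec 0$, $X_1Y_2+X_0Y_1H^\top=0$, $X_0Y_2=0$, $F_0Y_2=I_p$, $F_0Y_1=0$. Then with $K=U_0Y_1(X_0Y_1)^{-1}$ and $M=U_0Y_2$, the origin of $\dot x=(A+BK)x+(L+BM)f(t,Hx)$ is globally uniformly asymptotically stable for every $f:\mathbb{R}\times\mathbb{R}^p\to\mathbb{R}^p$ (piecewise continuous in $t$, locally Lipschitz in $z$) satisfying $z^\top f(t,z)\ge 0$ for all $t,z$.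
   Context: Data: $U_0=[u(t_0)\cdots u(t_{T-1})]$, $X_0=[x(t_0)\cdots x(t_{T-1})]$, $X_1=[\dot x(t_0)\cdots\dot x(t_{T-1})]$, $F_0=[f(t_0,z(t_0))\cdots f(t_{T-1},z(t_{T-1}))]$ from an experiment on the system. *)

theory Defs
  imports "HOL-Analysis.Analysis"
begin

definition pos_def_mat :: "real^'n^'n \<Rightarrow> bool" where
  "pos_def_mat P \<longleftrightarrow> (\<forall>x. x \<noteq> 0 \<longrightarrow> x \<bullet> (P *v x) > 0)"

definition neg_def_mat :: "real^'n^'n \<Rightarrow> bool" where
  "neg_def_mat P \<longleftrightarrow> (\<forall>x. x \<noteq> 0 \<longrightarrow> x \<bullet> (P *v x) < 0)"

definition piecewise_continuous_in_t :: "(real \<Rightarrow> 'a::topological_space \<Rightarrow> 'b::topological_space) \<Rightarrow> bool" where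
  "piecewise_continuous_in_t f \<longleftrightarrow>
     (\<forall>a b. \<exists>S. finite S \<and>
        continuous_on (({a..b} - S) \<times> UNIV) (\<lambda>(t,z). f t z) \<and>
        (\<forall>s\<in>S. \<forall>z. (\<exists>l. ((\<lambda>t. f t z) \<longlongrightarrow> l) (at_left s)) \<and>
                    (\<exists>r. ((\<lambda>t. f t z) \<longlongrightarrow> r) (at_right s))))"

definition is_solution :: "(real \<Rightarrow> real^'n \<Rightarrow> real^'n) \<Rightarrow> real \<Rightarrow> (real \<Rightarrow> real^'n) \<Rightarrow> bool" where
  "is_solution F t0 x \<longleftrightarrow> continuous_on {t0..} x \<and>
     (\<forall>t\<ge>t0. ((\<lambda>s. F s (x s)) has_integral (x t - x t0)) {t0..t})"

text \<open>Global uniform asymptotic stability of the origin of x' = F(t,x) (Khalil, Def. 4.4):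
  origin is an equilibrium, solutions exist for all forward time, and the origin is
  uniformly stable, globally uniformly bounded and globally uniformly attractive.\<close>
definition GUAS :: "(real \<Rightarrow> real^'n \<Rightarrow> real^'n) \<Rightarrow> bool" where
  "GUAS F \<longleftrightarrow>
     (\<forall>t. F t 0 = 0) \<and>
     (\<forall>t0 x0. \<exists>x. is_solution F t0 x \<and> x t0 = x0) \<and>
     (\<forall>\<epsilon>>0. \<exists>\<delta>>0. \<forall>t0 x. is_solution F t0 x \<and> norm (x t0) < \<delta> \<longrightarrow>
        (\<forall>t\<ge>t0. norm (x t) < \<epsilon>)) \<and>
     (\<forall>a>0. \<exists>\<beta>. \<forall>t0 x. is_solution F t0 x \<and> norm (x t0) < a \<longrightarrow>
        (\<forall>t\<ge>t0. norm (x t) < \<beta>)) \<and>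
     (\<forall>\<eta>>0. \<forall>c>0. \<exists>T\<ge>0. \<forall>t0 x. is_solution F t0 x \<and> norm (x t0) < c \<longrightarrow>
        (\<forall>t\<ge>t0 + T. norm (x t) < \<eta>))"

end

theory Submission imports Defs begin



lemma bound_mat: "\<exists>C>0. \<forall>x. norm ((A::real^'n^'m) *v x) \<le> C * norm x"
  using bounded_linear.pos_bounded[OF matrix_vector_mul_bounded_linear[of A]]
  by (auto simp: mult.commute)

lemma quad_lower:
  fixes P :: "real^'n^'n"
  assumes "pos_def_mat P"
  shows "\<exists>m>0. \<forall>x. m * (norm x)^2 \<le> x \<bullet> (P *v x)"
proof -
  let ?S = "sphere (0::real^'n) 1"
  let ?q = "\<lambda>x. x \<bullet> (P *v x)"
  have cS: "compact ?S" by simp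
  have neS: "?S \<noteq> {}" by simp
  have cq: "continuous_on ?S ?q" by (intro continuous_intros) 
  obtain x0 where x0: "x0 \<in> ?S" "\<And>y. y \<in> ?S \<Longrightarrow> ?q x0 \<le> ?q y"
    using continuous_attains_inf[OF cS neS cq] by blast
  have "x0 \<noteq> 0" using x0 by auto
  hence m: "?q x0 > 0" using assms unfolding pos_def_mat_def by auto
  show ?thesis
  proof (intro exI[of _ "?q x0"] conjI allI m)
    fix x :: "real^'n"
    show "?q x0 * (norm x)^2 \<le> ?q x"
    proof (cases "x = 0")
      case True then show ?thesis by simp
    next
      case False
      let ?u = "(1/norm x) *\<^sub>R x"
      have "?u \<in> ?S" using False by simp
      hence "?q x0 \<le> ?q ?u" by (rule x0(2))
      also have "?q ?u = ?q x / (norm x)^2"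
        by (simp add: matrix_vector_mult_scaleR power2_eq_square)
      finally show ?thesis using False by (simp add: field_simps)
    qed
  qed
qed

lemma quad_upper:
  fixes N :: "real^'n^'n"
  assumes "neg_def_mat N"
  shows "\<exists>c>0. \<forall>x. x \<bullet> (N *v x) \<le> - c * (norm x)^2"
proof -
  have neg: "\<And>x. x \<bullet> ((-N) *v x) = - (x \<bullet> (N *v x))"
    by (simp add: matrix_vector_mult_def inner_vec_def sum_negf)
  have "pos_def_mat (-N)" using assms unfolding pos_def_mat_def neg_def_mat_def neg by auto
  then obtain c where c: "c>0" "\<forall>x. c * (norm x)^2 \<le> x \<bullet> ((-N) *v x)" using quad_lower by blast
  have "\<forall>x. x \<bullet> (N *v x) \<le> - c * (norm x)^2"
  proof
    fix x :: "real^'n"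
    have "c * (norm x)^2 \<le> - (x \<bullet> (N *v x))" using c(2) neg by metis
    thus "x \<bullet> (N *v x) \<le> - c * (norm x)^2" by linarith
  qed
  with \<open>c > 0\<close> show ?thesis by blast
qed



lemma matrix_add_rdistrib': "((A::real^'n^'m) + B) ** C = A ** C + B ** C"
  by (vector matrix_matrix_mult_def sum.distrib[symmetric] field_simps)

lemma matrix_neg_l: "(- (A::real^'n^'m)) ** C = - (A ** C)"
  by (vector matrix_matrix_mult_def sum_negf)

lemma closed_loop:
  fixes A :: "real^'n^'n" and B :: "real^'m^'n" and L :: "real^'p^'n"
    and H :: "real^'n^'p"
    and U0 :: "real^'t^'m" and X0 :: "real^'t^'n" and X1 :: "real^'t^'n"
    and F0 :: "real^'t^'p"
    and Y1 :: "real^'n^'t" and Y2 :: "real^'p^'t"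
  assumes data: "X1 = A ** X0 + B ** U0 + L ** F0"
    and sym: "transpose (X0 ** Y1) = X0 ** Y1"
    and pd: "pos_def_mat (X0 ** Y1)"
    and c1: "X1 ** Y2 + X0 ** Y1 ** transpose H = 0"
    and c2: "X0 ** Y2 = 0"
    and c3: "F0 ** Y2 = mat 1"
    and c4: "F0 ** Y1 = 0"
  shows "X0 ** Y1 ** matrix_inv (X0 ** Y1) = mat 1"
    and "matrix_inv (X0 ** Y1) ** (X0 ** Y1) = mat 1"
    and "transpose (matrix_inv (X0 ** Y1)) = matrix_inv (X0 ** Y1)"
    and "A + B ** (U0 ** Y1 ** matrix_inv (X0 ** Y1)) = X1 ** Y1 ** matrix_inv (X0 ** Y1)"
    and "L + B ** (U0 ** Y2) = - (X0 ** Y1 ** transpose H)"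
proof -
  define P where "P = X0 ** Y1"
  define Q where "Q = matrix_inv P"
  have inj: "\<forall>x. P *v x = 0 \<longrightarrow> x = 0"
    using pd unfolding pos_def_mat_def P_def by (metis inner_zero_right less_irrefl)
  then obtain B' where "B' ** P = mat 1" using matrix_left_invertible_ker by blast
  hence "P ** B' = mat 1 \<and> B' ** P = mat 1" using matrix_left_right_inverse by blast
  hence PQ: "P ** Q = mat 1 \<and> Q ** P = mat 1"
    unfolding Q_def matrix_inv_def by (rule someI)
  show "X0 ** Y1 ** matrix_inv (X0 ** Y1) = mat 1" "matrix_inv (X0 ** Y1) ** (X0 ** Y1) = mat 1"
    using PQ by (auto simp: P_def Q_def)
  have "transpose Q ** P = mat 1"
    using PQ sym by (metis P_def matrix_transpose_mul transpose_mat)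
  hence "transpose Q = Q"
    by (metis PQ matrix_mul_assoc matrix_mul_lid matrix_mul_rid)
  thus "transpose (matrix_inv (X0 ** Y1)) = matrix_inv (X0 ** Y1)" by (simp add: Q_def P_def)
  have "X1 ** Y1 = A ** P + B ** (U0 ** Y1)"
    using c4 by (simp add: data matrix_add_rdistrib' matrix_mul_assoc[symmetric] P_def)
  hence "X1 ** Y1 ** Q = A + B ** (U0 ** Y1 ** Q)"
    using PQ by (simp add: matrix_add_rdistrib' matrix_mul_assoc[symmetric])
  thus "A + B ** (U0 ** Y1 ** matrix_inv (X0 ** Y1)) = X1 ** Y1 ** matrix_inv (X0 ** Y1)"
    by (simp add: Q_def P_def)
  have "X1 ** Y2 = B ** (U0 ** Y2) + L"
    using c2 c3 by (simp add: data matrix_add_rdistrib' matrix_mul_assoc[symmetric])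
  moreover have "X1 ** Y2 = - (X0 ** Y1 ** transpose H)" using c1
    by (simp add: eq_neg_iff_add_eq_0)
  ultimately show "L + B ** (U0 ** Y2) = - (X0 ** Y1 ** transpose H)" by (simp add: add.commute)
qed



lemma dot_sym_mat: "transpose Q = Q \<Longrightarrow> x \<bullet> ((Q::real^'n^'n) *v z) = (Q *v x) \<bullet> z"
  by (metis dot_lmul_matrix transpose_matrix_vector)

lemma dot_transpose: "y \<bullet> (transpose W *v z) = (W *v y) \<bullet> z" for W :: "real^'n^'m"
proof -
  have "y \<bullet> (transpose W *v z) = (z v* W) \<bullet> y" by (simp add: inner_commute)
  also have "\<dots> = z \<bullet> (W *v y)" by (rule dot_lmul_matrix)
  finally show ?thesis by (simp add: inner_commute)
qed

lemma neg_mv: "(- (M::real^'n^'m)) *v w = - (M *v w)"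
  by (simp add: matrix_vector_mult_def sum_negf vec_eq_iff)

lemma mv_neg: "(M::real^'n^'m) *v (- w) = - (M *v w)"
  by (simp add: matrix_vector_mult_def sum_negf vec_eq_iff)

lemma lyap_ineq:
  fixes P Q W :: "real^'n^'n" and H :: "real^'n^'p"
  assumes PQ: "P ** Q = mat 1" and QP: "Q ** P = mat 1" and Qs: "transpose Q = Q"
    and Ps: "transpose P = P" and pd: "pos_def_mat P"
    and nd: "neg_def_mat (transpose W + W)"
  shows "\<exists>\<gamma>>0. \<forall>x w. (H *v x) \<bullet> w \<ge> 0 \<longrightarrow>
           2 * (x \<bullet> (Q *v ((W ** Q) *v x + (- (P ** transpose H)) *v w))) \<le> - \<gamma> * (x \<bullet> (Q *v x))"
    and "\<exists>m>0. \<forall>x. m * (norm x)^2 \<le> x \<bullet> (Q *v x)"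
    and "\<exists>M>0. \<forall>x. x \<bullet> (Q *v x) \<le> M * (norm x)^2"
proof -
  have xPQ: "P *v (Q *v x) = x" for x by (simp add: matrix_vector_mul_assoc PQ)
  have V: "x \<bullet> (Q *v x) = (Q *v x) \<bullet> (P *v (Q *v x))" for x
    by (simp add: xPQ inner_commute)
  obtain c where c: "c > 0" "\<forall>y. y \<bullet> ((transpose W + W) *v y) \<le> - c * (norm y)^2"
    using quad_upper[OF nd] by blast
  obtain Cp where Cp: "Cp > 0" "\<forall>x. norm (P *v x) \<le> Cp * norm x" using bound_mat by blast
  obtain CQ where CQ: "CQ > 0" "\<forall>x. norm (Q *v x) \<le> CQ * norm x" using bound_mat by blast
  obtain mP where mP: "mP > 0" "\<forall>x. mP * (norm x)^2 \<le> x \<bullet> (P *v x)" using quad_lower[OF pd] by blast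
  have Vup: "x \<bullet> (Q *v x) \<le> Cp * (norm (Q *v x))^2" for x
  proof -
    have "x \<bullet> (Q *v x) \<le> norm (Q *v x) * norm (P *v (Q *v x))"
      unfolding V[of x] by (rule norm_cauchy_schwarz)
    also have "\<dots> \<le> norm (Q *v x) * (Cp * norm (Q *v x))"
      by (intro mult_left_mono) (use Cp in auto)
    finally show ?thesis by (simp add: power2_eq_square mult_ac)
  qed
  show "\<exists>\<gamma>>0. \<forall>x w. (H *v x) \<bullet> w \<ge> 0 \<longrightarrow>
           2 * (x \<bullet> (Q *v ((W ** Q) *v x + (- (P ** transpose H)) *v w))) \<le> - \<gamma> * (x \<bullet> (Q *v x))"
  proof (intro exI[of _ "c / Cp"] conjI allI impI)
    show "c / Cp > 0" using c Cp by simp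
    fix x :: "real^'n" and w assume hw: "(H *v x) \<bullet> w \<ge> 0"
    let ?y = "Q *v x"
    have e1: "x \<bullet> (Q *v ((W ** Q) *v x)) = ?y \<bullet> (W *v ?y)"
      by (metis dot_sym_mat[OF Qs] matrix_vector_mul_assoc)
    have e2: "x \<bullet> (Q *v ((- (P ** transpose H)) *v w)) = - ((H *v x) \<bullet> w)"
    proof -
      have "(- (P ** transpose H)) *v w = - (P *v (transpose H *v w))"
        by (simp only: neg_mv matrix_vector_mul_assoc)
      hence "Q *v ((- (P ** transpose H)) *v w) = - (transpose H *v w)"
        by (simp only: mv_neg matrix_vector_mul_assoc matrix_mul_assoc QP matrix_mul_lid)
      thus ?thesis by (simp only: inner_minus_right dot_transpose)
    qed
    have e3: "?y \<bullet> ((transpose W + W) *v ?y) = 2 * (?y \<bullet> (W *v ?y))"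
      unfolding matrix_vector_mult_add_rdistrib inner_add_right dot_transpose by (simp add: inner_commute)
    have "2 * (x \<bullet> (Q *v ((W ** Q) *v x + (- (P ** transpose H)) *v w)))
        = ?y \<bullet> ((transpose W + W) *v ?y) - 2 * ((H *v x) \<bullet> w)"
      by (simp add: matrix_vector_right_distrib inner_add_right e1 e2 e3)
    also have "\<dots> \<le> - c * (norm ?y)^2" using c(2)[rule_format, of ?y] hw by linarith
    also have "\<dots> \<le> - (c / Cp) * (x \<bullet> (Q *v x))"
    proof -
      have "(c / Cp) * (x \<bullet> (Q *v x)) \<le> (c / Cp) * (Cp * (norm ?y)^2)"
        by (intro mult_left_mono Vup) (use c Cp in auto)
      thus ?thesis using Cp by simp
    qed
    finally show "2 * (x \<bullet> (Q *v ((W ** Q) *v x + (- (P ** transpose H)) *v w))) \<le> - (c / Cp) * (x \<bullet> (Q *v x))" .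
  qed
  show "\<exists>M>0. \<forall>x. x \<bullet> (Q *v x) \<le> M * (norm x)^2"
  proof (intro exI[of _ CQ] conjI allI)
    fix x :: "real^'n"
    have "x \<bullet> (Q *v x) \<le> norm x * norm (Q *v x)" by (rule norm_cauchy_schwarz)
    also have "\<dots> \<le> norm x * (CQ * norm x)" by (intro mult_left_mono) (use CQ in auto)
    finally show "x \<bullet> (Q *v x) \<le> CQ * (norm x)^2" by (simp add: power2_eq_square mult_ac)
  qed (use CQ in auto)
  show "\<exists>m>0. \<forall>x. m * (norm x)^2 \<le> x \<bullet> (Q *v x)"
  proof (intro exI[of _ "mP / Cp^2"] conjI allI)
    fix x :: "real^'n"
    have "norm x \<le> Cp * norm (Q *v x)" using Cp(2) xPQ by metis
    hence "(norm x)^2 \<le> (Cp * norm (Q *v x))^2" by (intro power_mono) auto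
    hence "(mP / Cp^2) * (norm x)^2 \<le> (mP / Cp^2) * (Cp * norm (Q *v x))^2"
      by (intro mult_left_mono) (use mP Cp in auto)
    also have "\<dots> = mP * (norm (Q *v x))^2" using Cp by (simp add: power_mult_distrib)
    also have "\<dots> \<le> x \<bullet> (Q *v x)" using mP(2) V by metis
    finally show "(mP / Cp^2) * (norm x)^2 \<le> x \<bullet> (Q *v x)" .
  qed (use mP Cp in auto)
qed




lemma f_zero:
  fixes f :: "real \<Rightarrow> 'a::euclidean_space \<Rightarrow> 'a"
  assumes ll: "local_lipschitz UNIV UNIV f" and sec: "\<forall>t z. z \<bullet> f t z \<ge> 0"
  shows "f t 0 = 0"
proof (rule ccontr)
  define w where "w = f t 0"
  assume "f t 0 \<noteq> 0"
  hence wne: "w \<noteq> 0" "norm w > 0" by (auto simp: w_def)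
  obtain u L where u: "u > 0" and Lip: "\<And>s. s \<in> cball t u \<inter> UNIV \<Longrightarrow> L-lipschitz_on (cball 0 u \<inter> UNIV) (f s)"
    using local_lipschitzE[OF ll, of t 0] by auto
  have Lt: "L-lipschitz_on (cball 0 u) (f t)" using Lip[of t] u by auto
  hence L0: "L \<ge> 0" by (rule lipschitz_on_nonneg)
  define e where "e = min (u / norm w) (1 / (2 * (L + 1)))"
  have e0: "e > 0" using u wne L0 by (simp add: e_def)
  have eu: "e * norm w \<le> u" using wne by (simp add: e_def min_def field_simps split: if_splits)
  have eL: "L * e \<le> 1/2"
  proof -
    have "e \<le> 1 / (2 * (L + 1))" by (simp add: e_def)
    hence "L * e \<le> L * (1 / (2 * (L + 1)))" using L0 by (rule mult_left_mono)
    also have "\<dots> \<le> 1/2" using L0 by (simp add: field_simps)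
    finally show ?thesis .
  qed
  define z where "z = - (e *\<^sub>R w)"
  have zin: "z \<in> cball 0 u" using eu e0 by (simp add: z_def)
  have d: "norm (f t z - w) \<le> L * norm z"
    using lipschitz_on_normD[OF Lt zin, of 0] u by (simp add: w_def)
  have "z \<bullet> f t z \<ge> 0" using sec by blast
  hence "- e * (w \<bullet> f t z) \<ge> 0" by (simp add: z_def)
  hence neg: "w \<bullet> f t z \<le> 0" using e0 by (simp add: mult_le_0_iff)
  have "w \<bullet> f t z = w \<bullet> w + w \<bullet> (f t z - w)" by (simp add: inner_diff_right)
  also have "w \<bullet> (f t z - w) \<ge> - (norm w * (L * norm z))"
  proof -
    have "\<bar>w \<bullet> (f t z - w)\<bar> \<le> norm w * norm (f t z - w)" by (rule Cauchy_Schwarz_ineq2)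
    also have "\<dots> \<le> norm w * (L * norm z)" by (intro mult_left_mono d) auto
    finally show ?thesis by linarith
  qed
  moreover have "norm w * (L * norm z) = (L * e) * (norm w)^2"
    using e0 by (simp add: z_def power2_eq_square)
  moreover have "(L * e) * (norm w)^2 \<le> (1/2) * (norm w)^2" by (intro mult_right_mono eL) auto
  moreover have "w \<bullet> w = (norm w)^2" by (simp add: power2_norm_eq_inner)
  ultimately have "w \<bullet> f t z \<ge> (1/2) * (norm w)^2" by linarith
  moreover have "(norm w)^2 > 0" using wne by simp
  ultimately show False using neg by linarith
qed




lemma unif_local_lip:
  fixes f :: "real \<Rightarrow> 'a::euclidean_space \<Rightarrow> 'b::real_normed_vector"
  assumes ll: "local_lipschitz UNIV UNIV f" and cT: "compact T" and cX: "compact X"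
  shows "\<exists>\<delta>>0. \<exists>L. \<forall>t\<in>T. \<forall>x\<in>X. L-lipschitz_on (cball x \<delta>) (f t)"
proof (rule ccontr)
  assume H: "\<not> ?thesis"
  have "\<forall>n::nat. \<exists>tx p q. tx \<in> T \<times> X \<and> p \<in> cball (snd tx) (1 / Suc n) \<and> q \<in> cball (snd tx) (1 / Suc n)
          \<and> dist (f (fst tx) p) (f (fst tx) q) > real n * dist p q"
  proof
    fix n :: nat
    have "\<not> (\<forall>t\<in>T. \<forall>x\<in>X. (real n)-lipschitz_on (cball x (1 / Suc n)) (f t))"
      using H by (metis (no_types) of_nat_0_less_iff zero_less_Suc divide_pos_pos zero_less_one)
    then obtain t x where tx: "t \<in> T" "x \<in> X" "\<not> (real n)-lipschitz_on (cball x (1 / Suc n)) (f t)"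
      by blast
    then obtain p q where "p \<in> cball x (1 / Suc n)" "q \<in> cball x (1 / Suc n)"
      "dist (f t p) (f t q) > real n * dist p q"
      unfolding lipschitz_on_def by force
    thus "\<exists>tx p q. tx \<in> T \<times> X \<and> p \<in> cball (snd tx) (1 / Suc n) \<and> q \<in> cball (snd tx) (1 / Suc n)
          \<and> dist (f (fst tx) p) (f (fst tx) q) > real n * dist p q"
      using tx by (intro exI[of _ "(t,x)"]) auto
  qed
  then obtain tx p q where seq: "\<And>n. tx n \<in> T \<times> X" "\<And>n. p n \<in> cball (snd (tx n)) (1 / Suc n)"
     "\<And>n. q n \<in> cball (snd (tx n)) (1 / Suc n)"
     "\<And>n. dist (f (fst (tx n)) (p n)) (f (fst (tx n)) (q n)) > real n * dist (p n) (q n)"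
    by metis
  have "seq_compact (T \<times> X)" by (intro compact_imp_seq_compact compact_Times cT cX)
  then obtain l r where l: "l \<in> T \<times> X" and r: "strict_mono r" and lim: "(tx \<circ> r) \<longlonglongrightarrow> l"
    using seq(1) by (metis seq_compactE)
  obtain lt lx where lel: "l = (lt, lx)" by force
  obtain u L where u: "u > 0" and Lip: "\<And>s. s \<in> cball lt u \<inter> UNIV \<Longrightarrow> L-lipschitz_on (cball lx u \<inter> UNIV) (f s)"
    using local_lipschitzE[OF ll, of lt lx] by auto
  have u2: "u / 2 > 0" using u by simp
  have ev1: "eventually (\<lambda>n. dist ((tx \<circ> r) n) l < u / 2) sequentially"
    using lim u2 unfolding tendsto_iff by blast
  have ev2: "eventually (\<lambda>n. 1 / Suc n < u / 2) sequentially"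
  proof -
    obtain N :: nat where "N > 2 / u" using reals_Archimedean2 by blast
    hence "\<forall>n\<ge>N. 1 / Suc n < u / 2" using u
      by (auto simp: field_simps) (smt (verit) of_nat_le_iff mult_left_mono)
    thus ?thesis by (auto simp: eventually_sequentially)
  qed
  have ev3: "eventually (\<lambda>n. real n > L) sequentially"
    by (metis filterlim_at_top_dense filterlim_real_sequentially)
  have "eventually (\<lambda>n. False) sequentially"
    using ev1 ev2 ev3
  proof eventually_elim
    case (elim n)
    let ?m = "r n"
    have rn: "n \<le> r n" using r by (rule seq_suble)
    have "dist (fst (tx ?m)) lt < u / 2" "dist (snd (tx ?m)) lx < u / 2"
      using elim(1) dist_fst_le[of "tx ?m" l] dist_snd_le[of "tx ?m" l] by (auto simp: lel)
    moreover have "1 / Suc ?m \<le> 1 / Suc n" using rn by (simp add: frac_le)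
    ultimately have inb: "fst (tx ?m) \<in> cball lt u" "p ?m \<in> cball lx u" "q ?m \<in> cball lx u"
      using seq(2,3)[of ?m] elim(2) dist_triangle[of "p ?m" lx "snd (tx ?m)"]
        dist_triangle[of "q ?m" lx "snd (tx ?m)"] u
      by (auto simp: dist_commute)
    have L: "L-lipschitz_on (cball lx u) (f (fst (tx ?m)))" using Lip inb(1) by auto
    have "dist (f (fst (tx ?m)) (p ?m)) (f (fst (tx ?m)) (q ?m)) \<le> L * dist (p ?m) (q ?m)"
      using L inb(2,3) unfolding lipschitz_on_def by blast
    also have "\<dots> \<le> real ?m * dist (p ?m) (q ?m)"
      using elim(3) rn by (intro mult_right_mono) auto
    finally show False using seq(4)[of ?m] by linarith
  qed
  thus False by simp
qed


lemma unif_lip: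
  fixes f :: "real \<Rightarrow> 'a::euclidean_space \<Rightarrow> 'b::real_normed_vector"
  assumes ll: "local_lipschitz UNIV UNIV f"
  shows "\<exists>L. \<forall>t\<in>{a..b}. L-lipschitz_on (cball 0 R) (f t)"
proof (cases "R < 0")
  case True
  hence "cball (0::'a) R = {}" by simp
  thus ?thesis by (intro exI[of _ 0]) simp
next
  case False
  obtain \<delta> L where d: "\<delta> > 0" and Lip: "\<And>t x. t \<in> {a..b} \<Longrightarrow> x \<in> cball 0 R \<Longrightarrow> L-lipschitz_on (cball x \<delta>) (f t)"
    using unif_local_lip[OF ll compact_Icc[of a b] compact_cball[of 0 R]] by blast
  show ?thesis
  proof (intro exI[of _ L] ballI lipschitz_onI)
    fix t assume t: "t \<in> {a..b}"
    have "(0::'a) \<in> cball 0 R" using False by simp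
    from lipschitz_on_nonneg[OF Lip[OF t this]] show "0 \<le> L" .
    note L0 = this
    fix x y assume x: "x \<in> cball (0::'a) R" and y: "y \<in> cball (0::'a) R"
    define N :: nat where "N = nat \<lceil>dist x y / \<delta>\<rceil> + 1"
    have N0: "real N > 0" by (simp add: N_def)
    have "dist x y / \<delta> \<le> real N" unfolding N_def by linarith
    hence dN: "dist x y / real N \<le> \<delta>" using d N0 by (simp add: field_simps)
    define p where "p k = x + (real k / real N) *\<^sub>R (y - x)" for k :: nat
    have pin: "p k \<in> cball 0 R" if "k \<le> N" for k
    proof -
      have c: "0 \<le> real k / real N" "real k / real N \<le> 1" using that N0 by auto
      have "p k = (1 - real k / real N) *\<^sub>R x + (real k / real N) *\<^sub>R y"
        by (simp add: p_def algebra_simps)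
      thus ?thesis using convex_cball[of "0::'a" R] x y c unfolding convex_alt by metis
    qed
    have step: "dist (p (Suc k)) (p k) = dist x y / real N" for k
    proof -
      have "p (Suc k) - p k = (1 / real N) *\<^sub>R (y - x)"
        by (simp add: p_def algebra_simps add_divide_distrib)
      thus ?thesis using N0 by (simp add: dist_norm norm_minus_commute)
    qed
    have claim: "k \<le> N \<Longrightarrow> dist (f t (p k)) (f t x) \<le> L * (real k / real N * dist x y)" for k
    proof (induction k)
      case 0 thus ?case by (simp add: p_def)
    next
      case (Suc k)
      hence IH: "dist (f t (p k)) (f t x) \<le> L * (real k / real N * dist x y)" by simp
      have pk: "p k \<in> cball 0 R" using Suc.prems pin by simp
      have "p (Suc k) \<in> cball (p k) \<delta>" using step[of k] dN by (simp add: dist_commute)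
      moreover have "p k \<in> cball (p k) \<delta>" using d by simp
      ultimately have "dist (f t (p (Suc k))) (f t (p k)) \<le> L * dist (p (Suc k)) (p k)"
        using Lip[OF t pk] unfolding lipschitz_on_def by blast
      also have "\<dots> = L * (dist x y / real N)" by (simp add: step)
      finally have "dist (f t (p (Suc k))) (f t x) \<le> L * (dist x y / real N) + L * (real k / real N * dist x y)"
        using dist_triangle[of "f t (p (Suc k))" "f t x" "f t (p k)"] IH by linarith
      also have "\<dots> = L * (real (Suc k) / real N * dist x y)"
      proof -
        have e: "real (Suc k) / real N * dist x y = dist x y / real N + real k / real N * dist x y"
          by (simp only: of_nat_Suc add_divide_distrib distrib_right) (simp add: add.commute)
        show ?thesis unfolding e distrib_left ..
      qed
      finally show ?case .
    qed
    have "p N = y" using N0 by (simp add: p_def)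
    thus "dist (f t x) (f t y) \<le> L * dist x y"
      using claim[of N] N0 by (simp add: dist_commute)
  qed
qed


lemma deriv_from_integral:
  fixes g :: "real \<Rightarrow> 'a::banach" and y :: "real \<Rightarrow> 'a"
  assumes yint: "\<forall>t\<in>{a..b}. (g has_integral (y t - y a)) {a..t}"
    and fin: "finite S" and gc: "continuous_on ({a..b} - S) g"
    and t: "t \<in> {a<..<b} - S"
  shows "(y has_vector_derivative g t) (at t)"
proof -
  have ab: "a \<le> b" using t by auto
  have gi: "g integrable_on {a..b}" using yint ab by auto
  have y_eq: "y a + integral {a..u} g = y u" if "u \<in> {a..b}" for u
  proof -
    have "integral {a..u} g = y u - y a" using yint that by (simp add: integral_unique)
    thus ?thesis by simp
  qed
  have tin: "t \<in> {a..b} - S" using t by auto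
  have "continuous (at t within ({a..b} - S)) g"
    using gc tin by (simp add: continuous_on_eq_continuous_within)
  from integral_has_vector_derivative_continuous_at[OF gi tin fin this]
  have "((\<lambda>u. integral {a..u} g) has_vector_derivative g t) (at t within ({a..b} - S))" .
  hence "((\<lambda>u. integral {a..u} g) has_vector_derivative g t) (at t within ({a<..<b} - S))"
    by (rule has_vector_derivative_within_subset) auto
  moreover have op: "open ({a<..<b} - S)" using fin by (simp add: open_Diff finite_imp_closed)
  ultimately have id: "((\<lambda>u. integral {a..u} g) has_vector_derivative g t) (at t)"
    using has_vector_derivative_within_open[OF t op] by blast
  have "((\<lambda>u. y a + integral {a..u} g) has_vector_derivative g t) (at t)"
    using has_vector_derivative_add[OF has_vector_derivative_const id] by simp
  thus ?thesis
    by (rule has_vector_derivative_transform_within_open[OF _ op t]) (auto intro!: y_eq)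
qed

lemma lyap_decay:
  fixes Phi :: "real \<Rightarrow> real^'n \<Rightarrow> real^'n" and Q :: "real^'n^'n" and y :: "real \<Rightarrow> real^'n"
  assumes Qs: "transpose Q = Q"
    and dec: "\<forall>s\<in>{a..b}. 2 * (y s \<bullet> (Q *v Phi s (y s))) \<le> - \<gamma> * (y s \<bullet> (Q *v y s))"
    and ab: "a \<le> b"
    and yc: "continuous_on {a..b} y"
    and yint: "\<forall>t\<in>{a..b}. ((\<lambda>s. Phi s (y s)) has_integral (y t - y a)) {a..t}"
    and fin: "finite S" and gc: "continuous_on ({a..b} - S) (\<lambda>s. Phi s (y s))"
  shows "y b \<bullet> (Q *v y b) \<le> exp (- \<gamma> * (b - a)) * (y a \<bullet> (Q *v y a))"
proof -
  define g where "g s = Phi s (y s)" for s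
  define W where "W t = exp (\<gamma> * t) * (y t \<bullet> (Q *v y t))" for t
  define W' where "W' t = exp (\<gamma> * t) * (\<gamma> * (y t \<bullet> (Q *v y t)) + 2 * (y t \<bullet> (Q *v g t)))" for t
  have Qyc: "continuous_on {a..b} (\<lambda>x. Q *v y x)"
    by (rule bounded_linear.continuous_on[OF matrix_vector_mul_bounded_linear yc])
  have Wc: "continuous_on {a..b} W" unfolding W_def by (intro continuous_intros yc Qyc)
  have Wd: "(W has_vector_derivative W' t) (at t)" if t: "t \<in> {a..b} - (S \<union> {a, b})" for t
  proof -
    have t': "t \<in> {a<..<b} - S" using t by auto
    have yd: "(y has_vector_derivative g t) (at t)"
      using deriv_from_integral[OF yint[folded g_def] fin gc[folded g_def] t'] .
    have Qyd: "((\<lambda>u. Q *v y u) has_vector_derivative Q *v g t) (at t)"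
      by (rule bounded_linear.has_vector_derivative[OF matrix_vector_mul_bounded_linear yd])
    have Vd: "((\<lambda>u. y u \<bullet> (Q *v y u)) has_vector_derivative (y t \<bullet> (Q *v g t) + g t \<bullet> (Q *v y t))) (at t)"
      by (rule bounded_bilinear.has_vector_derivative[OF bounded_bilinear_inner yd Qyd])
    have "g t \<bullet> (Q *v y t) = y t \<bullet> (Q *v g t)"
      using dot_sym_mat[OF Qs, of "g t" "y t"] by (simp add: inner_commute)
    hence Vd': "((\<lambda>u. y u \<bullet> (Q *v y u)) has_real_derivative (2 * (y t \<bullet> (Q *v g t)))) (at t)"
      using Vd by (simp add: has_real_derivative_iff_has_vector_derivative)
    have Ed: "((\<lambda>u. exp (\<gamma> * u)) has_real_derivative (exp (\<gamma> * t) * \<gamma>)) (at t)"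
      by (auto intro!: derivative_eq_intros)
    have "(W has_real_derivative (exp (\<gamma> * t) * (2 * (y t \<bullet> (Q *v g t))) + exp (\<gamma> * t) * \<gamma> * (y t \<bullet> (Q *v y t)))) (at t)"
      unfolding W_def using DERIV_mult[OF Ed Vd'] by (simp add: algebra_simps)
    thus ?thesis by (simp add: W'_def has_real_derivative_iff_has_vector_derivative algebra_simps)
  qed
  have "(W' has_integral (W b - W a)) {a..b}"
    by (rule fundamental_theorem_of_calculus_strong[of "S \<union> {a,b}"]) (use fin ab Wd Wc in auto)
  moreover have "W' t \<le> 0" if "t \<in> {a..b}" for t
  proof -
    have "\<gamma> * (y t \<bullet> (Q *v y t)) + 2 * (y t \<bullet> (Q *v g t)) \<le> 0"
      using dec[rule_format, OF that] by (simp add: g_def)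
    thus ?thesis unfolding W'_def by (simp add: mult_nonneg_nonpos)
  qed
  ultimately have "W b - W a \<le> 0"
    using has_integral_nonneg[of "\<lambda>t. - W' t" "- (W b - W a)" "{a..b}"]
    by (auto dest: has_integral_neg)
  hence "exp (\<gamma> * b) * (y b \<bullet> (Q *v y b)) \<le> exp (\<gamma> * a) * (y a \<bullet> (Q *v y a))"
    by (simp add: W_def)
  hence "exp (- \<gamma> * b) * (exp (\<gamma> * b) * (y b \<bullet> (Q *v y b))) \<le> exp (- \<gamma> * b) * (exp (\<gamma> * a) * (y a \<bullet> (Q *v y a)))"
    by (intro mult_left_mono) auto
  thus ?thesis
    by (simp add: mult.assoc[symmetric] exp_add[symmetric] algebra_simps)
qed





lemma cont_Ici:
  fixes x :: "real \<Rightarrow> 'a::topological_space"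
  assumes "\<And>T. continuous_on {t0..T} x"
  shows "continuous_on {t0..} x"
  unfolding continuous_on_eq_continuous_within
proof
  fix t assume t: "t \<in> {t0..}"
  have "continuous (at t within {t0..t+1}) x"
    using assms[of "t+1"] t by (simp add: continuous_on_eq_continuous_within)
  moreover have "at t within {t0..} = at t within {t0..t+1}"
    by (rule at_within_nhd[where S="{t - 1 <..< t + 1}"]) auto
  ultimately show "continuous (at t within {t0..}) x" by (simp add: continuous_within)
qed

lemma poly_integral:
  assumes "t0 \<le> t"
  shows "((\<lambda>s. c * (s - t0)^k) has_integral (c * (t - t0)^(Suc k) / real (Suc k))) {t0..t}"
proof -
  have "((\<lambda>s. c * (s - t0)^k) has_integral
          ((\<lambda>s. c * (s - t0)^(Suc k) / real (Suc k)) t - (\<lambda>s. c * (s - t0)^(Suc k) / real (Suc k)) t0)) {t0..t}"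
  proof (rule fundamental_theorem_of_calculus[OF assms, where f="\<lambda>s. c * (s - t0)^(Suc k) / real (Suc k)"])
    fix s assume "s \<in> {t0..t}"
    have "((\<lambda>s. c * (s - t0)^(Suc k) / real (Suc k)) has_real_derivative
            c * (real (Suc k) * (s - t0)^k * 1) / real (Suc k)) (at s within {t0..t})"
      by (intro derivative_eq_intros) auto
    thus "((\<lambda>s. c * (s - t0)^(Suc k) / real (Suc k)) has_vector_derivative c * (s - t0)^k) (at s within {t0..t})"
      by (simp add: has_real_derivative_iff_has_vector_derivative)
  qed
  thus ?thesis by simp
qed

lemma integrable_lip:
  fixes G :: "real \<Rightarrow> 'a::euclidean_space \<Rightarrow> 'a"
  assumes lip: "\<And>s. s \<in> {a..b} \<Longrightarrow> L-lipschitz_on UNIV (G s)"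
    and G0: "\<And>s. G s 0 = 0"
    and meas: "(\<lambda>s. G s (y s)) \<in> borel_measurable (lebesgue_on {a..b})"
    and yc: "continuous_on {a..b} y"
  shows "(\<lambda>s. G s (y s)) integrable_on {a..b}"
proof (rule measurable_bounded_by_integrable_imp_integrable[OF meas])
  show "(\<lambda>s. L * norm (y s)) integrable_on {a..b}"
    by (intro integrable_continuous_interval continuous_intros yc)
  show "{a..b} \<in> sets lebesgue" by simp
  fix s assume s: "s \<in> {a..b}"
  have "norm (G s (y s) - G s 0) \<le> L * norm (y s - 0)"
    by (rule lipschitz_on_normD[OF lip[OF s]]) auto
  thus "norm (G s (y s)) \<le> L * norm (y s)" by (simp add: G0)
qed


lemma picard:
  fixes G :: "real \<Rightarrow> 'a::euclidean_space \<Rightarrow> 'a" and x0 :: 'a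
  assumes lip: "\<And>T. \<exists>L. \<forall>s\<in>{t0..T}. L-lipschitz_on UNIV (G s)"
    and G0: "\<And>s. G s 0 = 0"
    and meas: "\<And>y T. continuous_on {t0..T} y \<Longrightarrow> (\<lambda>s. G s (y s)) \<in> borel_measurable (lebesgue_on {t0..T})"
  shows "\<exists>x. continuous_on {t0..} x \<and> x t0 = x0 \<and>
             (\<forall>t\<ge>t0. ((\<lambda>s. G s (x s)) has_integral (x t - x t0)) {t0..t})"
proof -
  have integ: "(\<lambda>s. G s (y s)) integrable_on {t0..T}" if "continuous_on {t0..T} y" for y T
  proof -
    obtain L where "\<forall>s\<in>{t0..T}. L-lipschitz_on UNIV (G s)" using lip by blast
    thus ?thesis using integrable_lip[OF _ G0 meas[OF that] that] by blast
  qed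
  define Y where "Y = rec_nat (\<lambda>t. x0) (\<lambda>k yk. \<lambda>t. x0 + integral {t0..t} (\<lambda>s. G s (yk s)))"
  have Y0: "Y 0 = (\<lambda>t. x0)" by (simp add: Y_def)
  have YS: "Y (Suc k) = (\<lambda>t. x0 + integral {t0..t} (\<lambda>s. G s (Y k s)))" for k by (simp add: Y_def)
  have YSt: "Y (Suc j) t = x0 + integral {t0..t} (\<lambda>s. G s (Y j s))" for j t by (simp add: YS)
  have Yc: "continuous_on {t0..T} (Y k)" for k T
  proof (induction k arbitrary: T)
    case 0 thus ?case by (simp add: Y0)
  next
    case (Suc k)
    show ?case unfolding YS
      by (intro continuous_intros indefinite_integral_continuous_1 integ Suc.IH)
  qed
  define Xl where "Xl t = x0 + (\<Sum>i. Y (Suc i) t - Y i t)" for t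
  have Yt0: "Y k t0 = x0" for k by (cases k) (simp_all add: Y0 YS)
  have Xt0: "Xl t0 = x0" by (simp add: Xl_def Yt0)
  have main: "continuous_on {t0..T} Xl \<and> (\<forall>t\<in>{t0..T}. ((\<lambda>s. G s (Xl s)) has_integral (Xl t - x0)) {t0..t})"
    if T: "t0 \<le> T" for T
  proof -
    obtain L where L: "\<And>s. s \<in> {t0..T} \<Longrightarrow> L-lipschitz_on UNIV (G s)" using lip by blast
    have L0: "L \<ge> 0" using L[of t0] T by (auto intro: lipschitz_on_nonneg)
    have "compact ((\<lambda>t. norm (Y 1 t - Y 0 t)) ` {t0..T})"
      by (intro compact_continuous_image continuous_intros Yc) simp
    hence "bounded ((\<lambda>t. norm (Y 1 t - Y 0 t)) ` {t0..T})" by (rule compact_imp_bounded)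
    then obtain C where C': "\<forall>z\<in>(\<lambda>t. norm (Y 1 t - Y 0 t)) ` {t0..T}. norm z \<le> C"
      unfolding bounded_iff by blast
    have C: "norm (Y 1 t - Y 0 t) \<le> C" if "t \<in> {t0..T}" for t
      using C'[rule_format, OF imageI[OF that]] by simp
    have C0: "C \<ge> 0" using C[of t0] T by (meson atLeastAtMost_iff norm_ge_zero order.trans order_refl)
    have bnd: "\<forall>t\<in>{t0..T}. norm (Y (Suc k) t - Y k t) \<le> C * (L * (t - t0))^k / fact k" for k
    proof (induction k)
      case 0 thus ?case using C by simp
    next
      case (Suc k)
      show ?case
      proof
        fix t assume t: "t \<in> {t0..T}"
        have ct: "continuous_on {t0..t} (Y j)" for j by (rule Yc)
        have "Y (Suc (Suc k)) t - Y (Suc k) t = integral {t0..t} (\<lambda>s. G s (Y (Suc k) s)) - integral {t0..t} (\<lambda>s. G s (Y k s))"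
          using YSt[of "Suc k" t] YSt[of k t] by (metis add_diff_cancel_left)
        also have "\<dots> = integral {t0..t} (\<lambda>s. G s (Y (Suc k) s) - G s (Y k s))"
          by (rule integral_diff[symmetric]) (intro integ ct)+
        also have "norm \<dots> \<le> integral {t0..t} (\<lambda>s. (C * L^(Suc k) / fact k) * (s - t0)^k)"
        proof (rule integral_norm_bound_integral)
          show "(\<lambda>s. G s (Y (Suc k) s) - G s (Y k s)) integrable_on {t0..t}"
            by (intro integrable_diff integ ct)
          show "(\<lambda>s. (C * L^(Suc k) / fact k) * (s - t0)^k) integrable_on {t0..t}"
            by (intro integrable_continuous_interval continuous_intros)
          fix s assume s: "s \<in> {t0..t}"
          hence sT: "s \<in> {t0..T}" using t by auto
          have "norm (G s (Y (Suc k) s) - G s (Y k s)) \<le> L * norm (Y (Suc k) s - Y k s)"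
            by (rule lipschitz_on_normD[OF L[OF sT]]) auto
          also have "\<dots> \<le> L * (C * (L * (s - t0))^k / fact k)"
            using Suc.IH sT L0 by (intro mult_left_mono) auto
          also have "\<dots> = (C * L^(Suc k) / fact k) * (s - t0)^k"
            by (simp add: power_mult_distrib)
          finally show "norm (G s (Y (Suc k) s) - G s (Y k s)) \<le> (C * L^(Suc k) / fact k) * (s - t0)^k" .
        qed
        also have "\<dots> = (C * L^(Suc k) / fact k) * (t - t0)^(Suc k) / real (Suc k)"
          by (rule integral_unique[OF poly_integral]) (use t in auto)
        also have "\<dots> = C * (L * (t - t0))^(Suc k) / fact (Suc k)"
          unfolding power_mult_distrib fact_Suc by (simp add: divide_simps)
        finally show "norm (Y (Suc (Suc k)) t - Y (Suc k) t) \<le> C * (L * (t - t0))^(Suc k) / fact (Suc k)" .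
      qed
    qed
    define M where "M k = C * (inverse (fact k) * (L * (T - t0))^k)" for k
    have Msum: "summable M" unfolding M_def by (intro summable_mult summable_exp)
    have Mb: "norm (Y (Suc k) t - Y k t) \<le> M k" if "t \<in> {t0..T}" for k t
    proof -
      have "(L * (t - t0))^k \<le> (L * (T - t0))^k"
        using that L0 by (intro power_mono mult_left_mono) auto
      hence "C * (L * (t - t0))^k / fact k \<le> C * (L * (T - t0))^k / fact k"
        using C0 by (intro divide_right_mono mult_left_mono) auto
      moreover have "norm (Y (Suc k) t - Y k t) \<le> C * (L * (t - t0))^k / fact k"
        using bnd[of k] that by blast
      moreover have "C * (L * (T - t0))^k / fact k = M k"
        by (simp add: M_def divide_inverse mult_ac)
      ultimately show ?thesis by linarith
    qed
    have ul0: "uniform_limit {t0..T} (\<lambda>n t. \<Sum>i<n. Y (Suc i) t - Y i t) (\<lambda>t. \<Sum>i. Y (Suc i) t - Y i t) sequentially"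
      by (rule Weierstrass_m_test[OF Mb Msum])
    have ul: "uniform_limit {t0..T} Y Xl sequentially"
    proof -
      have "uniform_limit {t0..T} (\<lambda>n t. x0 + (\<Sum>i<n. Y (Suc i) t - Y i t)) Xl sequentially"
        unfolding Xl_def by (intro uniform_limit_add uniform_limit_const ul0)
      moreover have "(\<lambda>n t. x0 + (\<Sum>i<n. Y (Suc i) t - Y i t)) = Y"
      proof (intro ext)
        fix n t
        show "x0 + (\<Sum>i<n. Y (Suc i) t - Y i t) = Y n t"
          using sum_lessThan_telescope[of "\<lambda>i. Y i t" n] by (simp add: Y0)
      qed
      ultimately show ?thesis by simp
    qed
    have Xc: "continuous_on {t0..T} Xl"
      by (rule uniform_limit_theorem[OF _ ul]) (auto intro!: always_eventually Yc)
    have "((\<lambda>s. G s (Xl s)) has_integral (Xl t - x0)) {t0..t}" if t: "t \<in> {t0..T}" for t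
    proof -
      have Xct: "continuous_on {t0..t} Xl" using t by (intro continuous_on_subset[OF Xc]) auto
      have l1: "(\<lambda>n. Y (Suc n) t) \<longlonglongrightarrow> Xl t"
        using tendsto_uniform_limitI[OF ul t] by (rule LIMSEQ_Suc)
      have l2: "(\<lambda>n. integral {t0..t} (\<lambda>s. G s (Y n s))) \<longlonglongrightarrow> integral {t0..t} (\<lambda>s. G s (Xl s))"
      proof (rule tendstoI)
        fix e :: real assume e: "e > 0"
        define X where "X = (L + 1) * (T - t0 + 1)"
        have X: "X > 0" using L0 T by (simp add: X_def)
        define e' where "e' = e / (2 * X)"
        have e': "e' > 0" using e X by (simp add: e'_def)
        have "\<forall>\<^sub>F n in sequentially. \<forall>s\<in>{t0..T}. dist (Y n s) (Xl s) < e'"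
          using ul e' by (simp add: uniform_limit_iff)
        thus "\<forall>\<^sub>F n in sequentially. dist (integral {t0..t} (\<lambda>s. G s (Y n s))) (integral {t0..t} (\<lambda>s. G s (Xl s))) < e"
        proof eventually_elim
          case (elim n)
          have "dist (integral {t0..t} (\<lambda>s. G s (Y n s))) (integral {t0..t} (\<lambda>s. G s (Xl s)))
              = norm (integral {t0..t} (\<lambda>s. G s (Y n s) - G s (Xl s)))"
            by (simp add: dist_norm integral_diff integ Yc Xct)
          also have "\<dots> \<le> integral {t0..t} (\<lambda>s. L * e')"
          proof (rule integral_norm_bound_integral)
            show "(\<lambda>s. G s (Y n s) - G s (Xl s)) integrable_on {t0..t}"
              by (intro integrable_diff integ Yc Xct)
            show "(\<lambda>s. L * e') integrable_on {t0..t}" by (rule integrable_const_ivl)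
            fix s assume s: "s \<in> {t0..t}"
            hence sT: "s \<in> {t0..T}" using t by auto
            have "norm (G s (Y n s) - G s (Xl s)) \<le> L * norm (Y n s - Xl s)"
              by (rule lipschitz_on_normD[OF L[OF sT]]) auto
            also have "\<dots> \<le> L * e'"
              using elim sT L0 by (intro mult_left_mono) (auto simp: dist_norm less_imp_le)
            finally show "norm (G s (Y n s) - G s (Xl s)) \<le> L * e'" .
          qed
          also have "\<dots> = L * e' * (t - t0)" using t by simp
          also have "\<dots> \<le> (L + 1) * e' * (T - t0 + 1)"
            using t L0 e' by (intro mult_mono) auto
          also have "\<dots> = e' * X" by (simp add: X_def mult_ac)
          also have "\<dots> = e / 2" using X by (simp add: e'_def)
          also have "\<dots> < e" using e by simp
          finally show ?case .
        qed
      qed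
      have "(\<lambda>n. Y (Suc n) t) \<longlonglongrightarrow> x0 + integral {t0..t} (\<lambda>s. G s (Xl s))"
        unfolding YS by (intro tendsto_intros l2)
      with l1 have "Xl t = x0 + integral {t0..t} (\<lambda>s. G s (Xl s))" by (rule LIMSEQ_unique)
      moreover have "(\<lambda>s. G s (Xl s)) integrable_on {t0..t}" by (rule integ[OF Xct])
      ultimately show ?thesis by (simp add: has_integral_integral)
    qed
    with Xc show ?thesis by blast
  qed
  have "continuous_on {t0..T} Xl" for T
    by (cases "t0 \<le> T") (use main in auto)
  hence "continuous_on {t0..} Xl" by (rule cont_Ici)
  moreover have "\<forall>t\<ge>t0. ((\<lambda>s. G s (Xl s)) has_integral (Xl t - Xl t0)) {t0..t}"
    using main Xt0 by auto
  ultimately show ?thesis using Xt0 by blast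
qed




lemma meas_pw:
  fixes g :: "real \<Rightarrow> 'a::euclidean_space"
  assumes fin: "finite S" and gc: "continuous_on ({a..b} - S) g"
  shows "g \<in> borel_measurable (lebesgue_on {a..b})"
proof -
  have Sl: "S \<in> sets lebesgue" using fin by (intro negligible_imp_sets negligible_finite)
  have sl: "{a..b} - S \<in> sets lebesgue" using Sl by (intro sets.Diff) auto
  have "g \<in> borel_measurable (lebesgue_on ({a..b} - S))"
    by (rule continuous_imp_measurable_on_sets_lebesgue[OF gc sl])
  hence "g measurable_on ({a..b} - S)" using sl by (simp add: measurable_on_iff_borel_measurable)
  hence "g measurable_on {a..b}"
  proof (rule measurable_on_spike_set)
    show "negligible (({a..b} - S - {a..b}) \<union> ({a..b} - ({a..b} - S)))"
      by (rule negligible_subset[OF negligible_finite[OF fin]]) auto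
  qed
  thus ?thesis by (simp add: measurable_on_iff_borel_measurable)
qed

lemma pw_comp:
  fixes f :: "real \<Rightarrow> 'a::topological_space \<Rightarrow> 'b::topological_space"
  assumes pw: "piecewise_continuous_in_t f"
  shows "\<exists>S. finite S \<and> (\<forall>w. continuous_on {a..b} w \<longrightarrow> continuous_on ({a..b} - S) (\<lambda>s. f s (w s)))"
proof -
  obtain S where S: "finite S" "continuous_on (({a..b} - S) \<times> UNIV) (\<lambda>(t,z). f t z)"
    using pw unfolding piecewise_continuous_in_t_def by blast
  show ?thesis
  proof (intro exI[of _ S] conjI allI impI S(1))
    fix w :: "real \<Rightarrow> 'a" assume wc: "continuous_on {a..b} w"
    have "continuous_on ({a..b} - S) (\<lambda>s. (s, w s))"
      by (intro continuous_intros continuous_on_subset[OF wc]) auto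
    from continuous_on_compose2[OF S(2) this]
    show "continuous_on ({a..b} - S) (\<lambda>s. f s (w s))" by auto
  qed
qed

definition pr :: "real \<Rightarrow> 'a::real_normed_vector \<Rightarrow> 'a" where
  "pr r x = (if norm x \<le> r then x else (r / norm x) *\<^sub>R x)"

lemma pr_closest:
  fixes x :: "'a::euclidean_space"
  assumes r: "r > 0"
  shows "pr r x = closest_point (cball 0 r) x"
proof (rule closest_point_unique)
  show "convex (cball (0::'a) r)" "closed (cball (0::'a) r)" by auto
  show "pr r x \<in> cball 0 r" using r by (auto simp: pr_def)
  show "\<forall>z\<in>cball 0 r. dist x (pr r x) \<le> dist x z"
  proof
    fix z :: 'a assume z: "z \<in> cball 0 r"
    show "dist x (pr r x) \<le> dist x z"
    proof (cases "norm x \<le> r")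
      case True thus ?thesis by (simp add: pr_def)
    next
      case False
      hence nx: "norm x > r" by simp
      have "x - (r / norm x) *\<^sub>R x = (1 - r / norm x) *\<^sub>R x" by (simp add: algebra_simps)
      moreover have "\<bar>1 - r / norm x\<bar> = 1 - r / norm x"
      proof -
        have "r / norm x \<le> 1" using nx r by (simp add: divide_le_eq_1)
        thus ?thesis by simp
      qed
      ultimately have "dist x (pr r x) = (1 - r / norm x) * norm x"
        using False by (simp add: pr_def dist_norm)
      also have "\<dots> = norm x - r"
      proof -
        have "norm x \<noteq> 0" using nx r by linarith
        thus ?thesis by (simp add: field_simps)
      qed
      also have "\<dots> \<le> norm (x - z) + norm z - r" using norm_triangle_ineq2[of x z] by linarith
      also have "\<dots> \<le> dist x z" using z by (simp add: dist_norm)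
      finally show ?thesis .
    qed
  qed
qed

lemma pr_lip:
  fixes x y :: "'a::euclidean_space"
  assumes r: "r > 0"
  shows "norm (pr r x - pr r y) \<le> norm (x - y)"
  using closest_point_lipschitz[of "cball (0::'a) r" x y] r
  by (simp add: pr_closest[OF r] dist_norm)

lemma pr_scale:
  assumes r: "r > 0"
  shows "\<exists>c>0. pr r x = c *\<^sub>R x"
proof (cases "norm x \<le> r")
  case True thus ?thesis by (intro exI[of _ 1]) (simp add: pr_def)
next
  case False
  hence "norm x > 0" using r by linarith
  thus ?thesis using r False by (intro exI[of _ "r / norm x"]) (simp add: pr_def)
qed

lemma pr_norm: "r \<ge> 0 \<Longrightarrow> norm (pr r x) \<le> r"
  by (auto simp: pr_def)

lemma pr_id: "norm x \<le> r \<Longrightarrow> pr r x = x"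
  by (simp add: pr_def)

lemma pr_cont:
  fixes w :: "'b::topological_space \<Rightarrow> 'a::euclidean_space"
  assumes r: "r > 0" and wc: "continuous_on U w"
  shows "continuous_on U (\<lambda>s. pr r (w s))"
proof -
  have "continuous_on UNIV (pr r :: 'a \<Rightarrow> 'a)"
    by (rule lipschitz_on_continuous_on[of 1]) (auto intro!: lipschitz_onI simp: dist_norm pr_lip[OF r])
  thus ?thesis using continuous_on_compose2[OF _ wc] by blast
qed




lemma mv_cont: "continuous_on U g \<Longrightarrow> continuous_on U (\<lambda>s. (M::real^'a^'b) *v g s)"
  by (rule bounded_linear.continuous_on[OF matrix_vector_mul_bounded_linear])

lemma norm_from_V:
  fixes a b :: "'a::real_normed_vector"
  assumes m: "m > 0" and MM: "MM > 0"
    and h1: "m * (norm a)^2 \<le> Va" and h2: "Va \<le> exp (- \<gamma> * d) * Vb" and h3: "Vb \<le> MM * (norm b)^2"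
  shows "norm a \<le> sqrt (MM / m) * exp (- (\<gamma> / 2) * d) * norm b"
proof (rule power2_le_imp_le)
  show "0 \<le> sqrt (MM / m) * exp (- (\<gamma> / 2) * d) * norm b" using m MM by simp
  have "m * (norm a)^2 \<le> exp (- \<gamma> * d) * (MM * (norm b)^2)"
    using h1 h2 mult_left_mono[OF h3 exp_ge_zero[of "- \<gamma> * d"]] by linarith
  hence "(norm a)^2 \<le> (MM / m) * exp (- \<gamma> * d) * (norm b)^2"
    using m by (simp add: field_simps)
  also have "\<dots> = (sqrt (MM / m) * exp (- (\<gamma> / 2) * d) * norm b)^2"
  proof -
    have "(exp (- (\<gamma> / 2) * d))^2 = exp (- \<gamma> * d)"
      by (simp add: power2_eq_square exp_add[symmetric])
    thus ?thesis using m MM by (simp add: power_mult_distrib)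
  qed
  finally show "(norm a)^2 \<le> (sqrt (MM / m) * exp (- (\<gamma> / 2) * d) * norm b)^2" .
qed


theorem mainTheorem5:
  fixes A :: "real^'n^'n" and B :: "real^'m^'n" and L :: "real^'p^'n"
    and H :: "real^'n^'p"
    and U0 :: "real^'t^'m" and X0 :: "real^'t^'n" and X1 :: "real^'t^'n"
    and F0 :: "real^'t^'p"
    and Y1 :: "real^'n^'t" and Y2 :: "real^'p^'t"
  assumes data: "X1 = A ** X0 + B ** U0 + L ** F0"
    and sym: "transpose (X0 ** Y1) = X0 ** Y1"
    and pd: "pos_def_mat (X0 ** Y1)"
    and lyap: "neg_def_mat (transpose Y1 ** transpose X1 + X1 ** Y1)"
    and c1: "X1 ** Y2 + X0 ** Y1 ** transpose H = 0"
    and c2: "X0 ** Y2 = 0"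
    and c3: "F0 ** Y2 = mat 1"
    and c4: "F0 ** Y1 = 0"
  shows "\<forall>f :: real \<Rightarrow> real^'p \<Rightarrow> real^'p.
           piecewise_continuous_in_t f \<and> local_lipschitz UNIV UNIV f \<and>
           (\<forall>t z. z \<bullet> f t z \<ge> 0) \<longrightarrow>
           (let K = U0 ** Y1 ** matrix_inv (X0 ** Y1); M = U0 ** Y2 in
            GUAS (\<lambda>t x. (A + B ** K) *v x + (L + B ** M) *v f t (H *v x)))"
  proof (intro allI impI)
  fix f :: "real \<Rightarrow> real^'p \<Rightarrow> real^'p"
  assume fa: "piecewise_continuous_in_t f \<and> local_lipschitz UNIV UNIV f \<and> (\<forall>t z. z \<bullet> f t z \<ge> 0)"
  hence pw: "piecewise_continuous_in_t f" and ll: "local_lipschitz UNIV UNIV f"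
    and sec: "\<forall>t z. z \<bullet> f t z \<ge> 0" by auto
  define P where "P = X0 ** Y1"
  define Q where "Q = matrix_inv (X0 ** Y1)"
  define W where "W = X1 ** Y1"
  define Lc where "Lc = - (P ** transpose H)"
  note cl = closed_loop[OF data sym pd c1 c2 c3 c4]
  have PQ: "P ** Q = mat 1" and QP: "Q ** P = mat 1" and Qs: "transpose Q = Q"
    using cl(1-3) by (simp_all add: P_def Q_def)
  have Aeq: "A + B ** (U0 ** Y1 ** matrix_inv (X0 ** Y1)) = W ** Q"
    using cl(4) by (simp add: W_def Q_def)
  have Leq: "L + B ** (U0 ** Y2) = Lc" using cl(5) by (simp add: Lc_def P_def)
  have nd: "neg_def_mat (transpose W + W)" using lyap by (simp add: W_def matrix_transpose_mul)
  have Ps: "transpose P = P" using sym by (simp add: P_def)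
  have pdP: "pos_def_mat P" using pd by (simp add: P_def)
  obtain \<gamma> where \<gamma>: "\<gamma> > 0" and dec0: "\<And>x w. (H *v x) \<bullet> w \<ge> 0 \<Longrightarrow>
        2 * (x \<bullet> (Q *v ((W ** Q) *v x + Lc *v w))) \<le> - \<gamma> * (x \<bullet> (Q *v x))"
    using lyap_ineq(1)[OF PQ QP Qs Ps pdP nd, of H] unfolding Lc_def by blast
  obtain m where m: "m > 0" and mV: "\<And>x. m * (norm x)^2 \<le> x \<bullet> (Q *v x)"
    using lyap_ineq(2)[OF PQ QP Qs Ps pdP nd] by blast
  obtain MM where MM: "MM > 0" and MV: "\<And>x. x \<bullet> (Q *v x) \<le> MM * (norm x)^2"
    using lyap_ineq(3)[OF PQ QP Qs Ps pdP nd] by blast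
  have f0: "\<And>t. f t 0 = 0" using f_zero[OF ll sec] by blast
  define k where "k = sqrt (MM / m)"
  define c where "c = \<gamma> / 2"
  have k0: "k > 0" using m MM by (simp add: k_def)
  have c0: "c > 0" using \<gamma> by (simp add: c_def)
  define F where "F = (\<lambda>t x. (W ** Q) *v x + Lc *v f t (H *v x))"
  have decay: "norm (y b) \<le> k * exp (- c * (b - a)) * norm (y a)"
    if ab: "a \<le> b" and yc: "continuous_on {a..b} y"
      and yint: "\<forall>t\<in>{a..b}. ((\<lambda>s. (W ** Q) *v y s + Lc *v g s) has_integral (y t - y a)) {a..t}"
      and gc: "\<exists>S. finite S \<and> continuous_on ({a..b} - S) g"
      and gs: "\<forall>s\<in>{a..b}. (H *v y s) \<bullet> g s \<ge> 0"
    for y g a b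
  proof -
    obtain S where S: "finite S" "continuous_on ({a..b} - S) g" using gc by blast
    define Phi where "Phi = (\<lambda>s x. (W ** Q) *v x + Lc *v g s)"
    have "y b \<bullet> (Q *v y b) \<le> exp (- \<gamma> * (b - a)) * (y a \<bullet> (Q *v y a))"
    proof (rule lyap_decay[OF Qs _ ab yc _ S(1), of Phi])
      show "\<forall>s\<in>{a..b}. 2 * (y s \<bullet> (Q *v Phi s (y s))) \<le> - \<gamma> * (y s \<bullet> (Q *v y s))"
        using dec0 gs by (simp add: Phi_def)
      show "\<forall>t\<in>{a..b}. ((\<lambda>s. Phi s (y s)) has_integral (y t - y a)) {a..t}"
        using yint by (simp add: Phi_def)
      show "continuous_on ({a..b} - S) (\<lambda>s. Phi s (y s))"
        unfolding Phi_def
        by (intro continuous_intros mv_cont S(2) continuous_on_subset[OF yc]) auto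
    qed
    from norm_from_V[OF m MM mV this MV]
    show ?thesis by (simp add: k_def c_def)
  qed
  have sol_decay: "norm (x t) \<le> k * exp (- c * (t - t0)) * norm (x t0)"
    if sol: "is_solution F t0 x" and t: "t0 \<le> t" for t0 x t
  proof -
    have xc: "continuous_on {t0..t} x"
      using sol unfolding is_solution_def by (auto intro: continuous_on_subset)
    obtain S where S: "finite S" "\<And>w. continuous_on {t0..t} w \<Longrightarrow> continuous_on ({t0..t} - S) (\<lambda>s. f s (w s))"
      using pw_comp[OF pw, of t0 t] by blast
    show ?thesis
    proof (rule decay[OF t xc, of "\<lambda>s. f s (H *v x s)"])
      show "\<forall>s\<in>{t0..t}. ((\<lambda>s. (W ** Q) *v x s + Lc *v f s (H *v x s)) has_integral (x s - x t0)) {t0..s}"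
        using sol unfolding is_solution_def F_def by auto
      show "\<exists>S. finite S \<and> continuous_on ({t0..t} - S) (\<lambda>s. f s (H *v x s))"
        using S by (intro exI[of _ S]) (auto intro: mv_cont xc)
      show "\<forall>s\<in>{t0..t}. (H *v x s) \<bullet> f s (H *v x s) \<ge> 0" using sec by auto
    qed
  qed
  have "GUAS F"
    unfolding GUAS_def
  proof (intro conjI)
    show "\<forall>t. F t 0 = 0" by (simp add: F_def f0)
    show "\<forall>t0 x0. \<exists>x. is_solution F t0 x \<and> x t0 = x0"
    proof (intro allI)
      fix t0 :: real and x0 :: "real^'n"
      define \<rho> where "\<rho> = k * norm x0 + 1"
      have "k * norm x0 \<ge> 0" using k0 by simp
      hence \<rho>: "\<rho> > 0" by (simp add: \<rho>_def)
      define G where "G = (\<lambda>t x. (W ** Q) *v x + Lc *v f t (H *v pr \<rho> x))"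
      obtain CW where CW: "CW > 0" "\<And>x. norm ((W ** Q) *v x) \<le> CW * norm x" using bound_mat by blast
      obtain CL where CL: "CL > 0" "\<And>x. norm (Lc *v x) \<le> CL * norm x" using bound_mat by blast
      obtain CH where CH: "CH > 0" "\<And>x. norm (H *v x) \<le> CH * norm x" using bound_mat by blast
      have Hpr: "H *v pr \<rho> x \<in> cball 0 (CH * \<rho>)" for x
      proof -
        have "norm (H *v pr \<rho> x) \<le> CH * norm (pr \<rho> x)" by (rule CH(2))
        also have "\<dots> \<le> CH * \<rho>" using CH \<rho> by (intro mult_left_mono pr_norm) auto
        finally show ?thesis by simp
      qed
      have lip: "\<exists>LG. \<forall>s\<in>{t0..T}. LG-lipschitz_on UNIV (G s)" for T
      proof -
        obtain Lf where Lf: "\<And>s. s \<in> {t0..T} \<Longrightarrow> Lf-lipschitz_on (cball 0 (CH * \<rho>)) (f s)"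
          using unif_lip[OF ll, of t0 T "CH * \<rho>"] by blast
        show ?thesis
        proof (intro exI[of _ "CW + CL * Lf * CH"] ballI lipschitz_onI)
          fix s assume s: "s \<in> {t0..T}"
          have Lf0: "Lf \<ge> 0" using Lf[OF s] by (rule lipschitz_on_nonneg)
          thus "0 \<le> CW + CL * Lf * CH" using CW CL CH by simp
          fix a b :: "real^'n"
          have eqG: "G s a - G s b = (W ** Q) *v (a - b) + Lc *v (f s (H *v pr \<rho> a) - f s (H *v pr \<rho> b))"
            by (simp add: G_def algebra_simps)
          have n1: "norm (G s a - G s b) \<le> CW * norm (a - b) + CL * norm (f s (H *v pr \<rho> a) - f s (H *v pr \<rho> b))"
            unfolding eqG using CW(2)[of "a - b"] CL(2)[of "f s (H *v pr \<rho> a) - f s (H *v pr \<rho> b)"]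
              norm_triangle_ineq[of "(W ** Q) *v (a - b)" "Lc *v (f s (H *v pr \<rho> a) - f s (H *v pr \<rho> b))"]
            by linarith
          have n2: "norm (f s (H *v pr \<rho> a) - f s (H *v pr \<rho> b)) \<le> Lf * norm (H *v pr \<rho> a - H *v pr \<rho> b)"
            by (rule lipschitz_on_normD[OF Lf[OF s] Hpr Hpr])
          have n3: "norm (H *v pr \<rho> a - H *v pr \<rho> b) \<le> CH * norm (a - b)"
          proof -
            have "norm (H *v pr \<rho> a - H *v pr \<rho> b) = norm (H *v (pr \<rho> a - pr \<rho> b))"
              by (simp add: matrix_vector_mult_diff_distrib)
            also have "\<dots> \<le> CH * norm (pr \<rho> a - pr \<rho> b)" by (rule CH(2))
            also have "\<dots> \<le> CH * norm (a - b)" using CH by (intro mult_left_mono pr_lip[OF \<rho>]) auto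
            finally show ?thesis .
          qed
          have "Lf * norm (H *v pr \<rho> a - H *v pr \<rho> b) \<le> Lf * (CH * norm (a - b))"
            using n3 Lf0 by (rule mult_left_mono)
          hence "CL * norm (f s (H *v pr \<rho> a) - f s (H *v pr \<rho> b)) \<le> CL * (Lf * (CH * norm (a - b)))"
            using n2 CL(1) by (intro mult_left_mono) auto
          hence "norm (G s a - G s b) \<le> (CW + CL * Lf * CH) * norm (a - b)"
            using n1 by (simp add: algebra_simps)
          thus "dist (G s a) (G s b) \<le> (CW + CL * Lf * CH) * dist a b"
            by (simp add: dist_norm)
        qed
      qed
      have G0: "G s 0 = 0" for s by (simp add: G_def pr_def f0)
      have Gc: "\<exists>S. finite S \<and> continuous_on ({t0..T} - S) (\<lambda>s. f s (H *v pr \<rho> (y s)))"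
        if yc: "continuous_on {t0..T} y" for y T
      proof -
        obtain S where S: "finite S" "\<And>w. continuous_on {t0..T} w \<Longrightarrow> continuous_on ({t0..T} - S) (\<lambda>s. f s (w s))"
          using pw_comp[OF pw, of t0 T] by blast
        have "continuous_on {t0..T} (\<lambda>s. H *v pr \<rho> (y s))" by (intro mv_cont pr_cont[OF \<rho> yc])
        thus ?thesis using S by blast
      qed
      have meas: "(\<lambda>s. G s (y s)) \<in> borel_measurable (lebesgue_on {t0..T})"
        if yc: "continuous_on {t0..T} y" for y T
      proof -
        obtain S where S: "finite S" "continuous_on ({t0..T} - S) (\<lambda>s. f s (H *v pr \<rho> (y s)))"
          using Gc[OF yc] by blast
        have "continuous_on ({t0..T} - S) (\<lambda>s. G s (y s))"
          unfolding G_def by (intro continuous_intros mv_cont S(2) continuous_on_subset[OF yc]) auto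
        thus ?thesis by (rule meas_pw[OF S(1)])
      qed
      obtain y where yc: "continuous_on {t0..} y" and y0: "y t0 = x0"
        and yint: "\<forall>t\<ge>t0. ((\<lambda>s. G s (y s)) has_integral (y t - y t0)) {t0..t}"
        using picard[of t0 G x0, OF lip G0 meas] by blast
      have ybnd: "norm (y t) < \<rho>" if t: "t \<ge> t0" for t
      proof -
        have yct: "continuous_on {t0..t} y" using yc by (rule continuous_on_subset) auto
        have "norm (y t) \<le> k * exp (- c * (t - t0)) * norm (y t0)"
        proof (rule decay[OF t yct, of "\<lambda>s. f s (H *v pr \<rho> (y s))"])
          show "\<forall>s\<in>{t0..t}. ((\<lambda>s. (W ** Q) *v y s + Lc *v f s (H *v pr \<rho> (y s))) has_integral (y s - y t0)) {t0..s}"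
            using yint unfolding G_def by auto
          show "\<exists>S. finite S \<and> continuous_on ({t0..t} - S) (\<lambda>s. f s (H *v pr \<rho> (y s)))"
            by (rule Gc[OF yct])
          show "\<forall>s\<in>{t0..t}. (H *v y s) \<bullet> f s (H *v pr \<rho> (y s)) \<ge> 0"
          proof
            fix s
            obtain cc where cc: "cc > 0" "pr \<rho> (y s) = cc *\<^sub>R y s" using pr_scale[OF \<rho>] by blast
            have "0 \<le> (cc *\<^sub>R (H *v y s)) \<bullet> f s (cc *\<^sub>R (H *v y s))" using sec by blast
            hence "0 \<le> cc * ((H *v y s) \<bullet> f s (cc *\<^sub>R (H *v y s)))" by simp
            hence "0 \<le> (H *v y s) \<bullet> f s (cc *\<^sub>R (H *v y s))" using cc(1) by (simp add: zero_le_mult_iff)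
            thus "(H *v y s) \<bullet> f s (H *v pr \<rho> (y s)) \<ge> 0"
              using cc(2) by (simp add: matrix_vector_mult_scaleR)
          qed
        qed
        also have "\<dots> \<le> k * 1 * norm x0"
        proof -
          have "exp (- c * (t - t0)) \<le> 1" using c0 t by simp
          thus ?thesis unfolding y0 using k0 by (intro mult_right_mono mult_left_mono) auto
        qed
        also have "\<dots> < \<rho>" by (simp add: \<rho>_def)
        finally show ?thesis .
      qed
      have "is_solution F t0 y"
        unfolding is_solution_def
      proof (intro conjI yc allI impI)
        fix t assume t: "t0 \<le> t"
        have gi: "((\<lambda>s. G s (y s)) has_integral (y t - y t0)) {t0..t}" using yint t by blast
        have eqGF: "G s (y s) = F s (y s)" if "s \<in> {t0..t}" for s
        proof -
          have "norm (y s) \<le> \<rho>" using ybnd[of s] that by auto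
          thus ?thesis by (simp add: G_def F_def pr_id)
        qed
        have "((\<lambda>s. G s (y s)) has_integral (y t - y t0)) {t0..t} = ((\<lambda>s. F s (y s)) has_integral (y t - y t0)) {t0..t}"
          by (rule has_integral_cong) (rule eqGF)
        thus "((\<lambda>s. F s (y s)) has_integral (y t - y t0)) {t0..t}" using gi by simp
      qed
      thus "\<exists>x. is_solution F t0 x \<and> x t0 = x0" using y0 by blast
    qed
    have bnd1: "norm (x t) \<le> k * norm (x t0)" if "is_solution F t0 x" "t \<ge> t0" for t0 x t
    proof -
      have "norm (x t) \<le> k * exp (- c * (t - t0)) * norm (x t0)" by (rule sol_decay[OF that])
      also have "\<dots> \<le> k * 1 * norm (x t0)"
      proof -
        have "exp (- c * (t - t0)) \<le> 1" using c0 that(2) by simp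
        thus ?thesis using k0 by (intro mult_right_mono mult_left_mono) auto
      qed
      finally show ?thesis by simp
    qed
    show "\<forall>\<epsilon>>0. \<exists>\<delta>>0. \<forall>t0 x. is_solution F t0 x \<and> norm (x t0) < \<delta> \<longrightarrow> (\<forall>t\<ge>t0. norm (x t) < \<epsilon>)"
    proof (intro allI impI)
      fix \<epsilon> :: real assume e: "\<epsilon> > 0"
      show "\<exists>\<delta>>0. \<forall>t0 x. is_solution F t0 x \<and> norm (x t0) < \<delta> \<longrightarrow> (\<forall>t\<ge>t0. norm (x t) < \<epsilon>)"
      proof (intro exI[of _ "\<epsilon> / k"] conjI allI impI)
        show "\<epsilon> / k > 0" using e k0 by simp
        fix t0 x t assume h: "is_solution F t0 x \<and> norm (x t0) < \<epsilon> / k" and t: "t0 \<le> t"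
        have "norm (x t) \<le> k * norm (x t0)" using bnd1 h t by blast
        also have "\<dots> < k * (\<epsilon> / k)" using h k0 by (intro mult_strict_left_mono) auto
        finally show "norm (x t) < \<epsilon>" using k0 by simp
      qed
    qed
    show "\<forall>a>0. \<exists>\<beta>. \<forall>t0 x. is_solution F t0 x \<and> norm (x t0) < a \<longrightarrow> (\<forall>t\<ge>t0. norm (x t) < \<beta>)"
    proof (intro allI impI)
      fix a :: real assume a: "a > 0"
      show "\<exists>\<beta>. \<forall>t0 x. is_solution F t0 x \<and> norm (x t0) < a \<longrightarrow> (\<forall>t\<ge>t0. norm (x t) < \<beta>)"
      proof (intro exI[of _ "k * a"] allI impI)
        fix t0 x t assume h: "is_solution F t0 x \<and> norm (x t0) < a" and t: "t0 \<le> t"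
        have "norm (x t) \<le> k * norm (x t0)" using bnd1 h t by blast
        also have "\<dots> < k * a" using h k0 by (intro mult_strict_left_mono) auto
        finally show "norm (x t) < k * a" .
      qed
    qed
    show "\<forall>\<eta>>0. \<forall>c0>0. \<exists>T\<ge>0. \<forall>t0 x. is_solution F t0 x \<and> norm (x t0) < c0 \<longrightarrow> (\<forall>t\<ge>t0 + T. norm (x t) < \<eta>)"
    proof (intro allI impI)
      fix \<eta> c1 :: real assume \<eta>: "\<eta> > 0" and c1: "c1 > 0"
      define T where "T = max 0 (ln (k * c1 / \<eta>) / c)"
      have keT: "k * c1 * exp (- c * T) \<le> \<eta>"
      proof (cases "k * c1 \<le> \<eta>")
        case True
        have "exp (- c * T) \<le> 1" using c0 by (simp add: T_def)
        hence "k * c1 * exp (- c * T) \<le> k * c1 * 1" using k0 c1 by (intro mult_left_mono) auto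
        thus ?thesis using True by simp
      next
        case False
        hence pos: "k * c1 / \<eta> > 0" using k0 c1 \<eta> by simp
        have "ln (k * c1 / \<eta>) / c \<le> T" by (simp add: T_def)
        hence "ln (k * c1 / \<eta>) \<le> c * T" using c0 by (simp add: field_simps)
        hence "exp (ln (k * c1 / \<eta>)) \<le> exp (c * T)" by simp
        hence "k * c1 / \<eta> \<le> exp (c * T)" using pos by simp
        hence "k * c1 \<le> \<eta> * exp (c * T)" using \<eta> by (simp add: field_simps)
        hence "k * c1 * exp (- c * T) \<le> \<eta> * exp (c * T) * exp (- c * T)" by (intro mult_right_mono) auto
        thus ?thesis by (simp add: mult.assoc exp_add[symmetric])
      qed
      show "\<exists>T\<ge>0. \<forall>t0 x. is_solution F t0 x \<and> norm (x t0) < c1 \<longrightarrow> (\<forall>t\<ge>t0 + T. norm (x t) < \<eta>)"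
      proof (intro exI[of _ T] conjI allI impI)
        show "T \<ge> 0" by (simp add: T_def)
        fix t0 x t assume h: "is_solution F t0 x \<and> norm (x t0) < c1" and t: "t0 + T \<le> t"
        have T0: "T \<ge> 0" by (simp add: T_def)
        have "norm (x t) \<le> k * exp (- c * (t - t0)) * norm (x t0)"
          using sol_decay[of t0 x t] h t T0 by auto
        also have "\<dots> < k * exp (- c * (t - t0)) * c1"
          using h k0 by (intro mult_strict_left_mono) auto
        also have "\<dots> \<le> k * exp (- c * T) * c1"
          using t k0 c1 c0 by (intro mult_right_mono mult_left_mono) auto
        also have "\<dots> \<le> \<eta>" using keT by (simp add: mult_ac)
        finally show "norm (x t) < \<eta>" .
      qed
    qed
  qed
  thus "let K = U0 ** Y1 ** matrix_inv (X0 ** Y1); M = U0 ** Y2 in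
            GUAS (\<lambda>t x. (A + B ** K) *v x + (L + B ** M) *v f t (H *v x))"
    by (simp add: Let_def Aeq Leq F_def)
qed

end
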